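(* Let $U\subset\mathbb C$ be a convex domain bounded by a smooth Jordan curve, and let $f$ be holomorphic in a neighborhood of $\overline U$ with $\operatorname{Re}(f')>0$ in $U$ and $f(z)\ne z$ for all $z\in\partial U$. Let $V^*=\{z\in U\cap f^{-1}(U): f(z)\ne z\}$ and $U^*=\{z\in U: f(z)\neq z\}$. If $z\in V^*$, then the segment $[z,f(z)]$ is contained in $U^*$.
   Context: $[z,w]$ denotes the Euclidean segment between $z$ and $w$. *)

theory Defs
  imports "HOL-Analysis.Analysis"
begin

definition smooth_jordan_curve :: "(real \<Rightarrow> complex) \<Rightarrow> bool" where
  "smooth_jordan_curve g \<longleftrightarrow>
     simple_path g \<and> pathfinish g = pathstart g \<and>
     g C1_differentiable_on {0..1} \<and>
     (\<forall>t\<in>{0..1}. vector_derivative g (at t within {0..1}) \<noteq> 0) \<and>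
     vector_derivative g (at 0 within {0..1}) = vector_derivative g (at 1 within {0..1})"

end

theory Submission
  imports Defs
begin

lemma Re_ofr: "Re (complex_of_real r * z) = r * Re z" by simp

theorem lemma3p3:
  fixes U :: "complex set" and f :: "complex \<Rightarrow> complex" and g :: "real \<Rightarrow> complex"
    and z :: complex
  assumes "open U" and "connected U" and "convex U" and "bounded U"
    and "smooth_jordan_curve g" and "frontier U = path_image g"
    and "\<exists>W. open W \<and> closure U \<subseteq> W \<and> f holomorphic_on W"
    and "\<forall>w\<in>U. Re (deriv f w) > 0"
    and "\<forall>w\<in>frontier U. f w \<noteq> w"
    and "z \<in> {w \<in> U \<inter> f -` U. f w \<noteq> w}"
  shows "closed_segment z (f z) \<subseteq> {w \<in> U. f w \<noteq> w}"
proof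
  fix w assume wseg: "w \<in> closed_segment z (f z)"
  from assms(10) have zU: "z \<in> U" and fzU: "f z \<in> U" and fz: "f z \<noteq> z" by auto
  have segU: "closed_segment z (f z) \<subseteq> U"
    using assms(3) zU fzU by (simp add: closed_segment_subset)
  obtain W where W: "open W" "closure U \<subseteq> W" "f holomorphic_on W" using assms(7) by blast
  have UW: "U \<subseteq> W" using W(2) closure_subset by blast
  have der: "(f has_field_derivative deriv f u) (at u)" if "u \<in> U" for u
    using W UW that holomorphic_derivI by blast
  have wU: "w \<in> U" using wseg segU by blast
  moreover have "f w \<noteq> w"
  proof
    assume fw: "f w = w"
    obtain t where t: "0 \<le> t" "t \<le> 1" and wt: "w = (1 - t) *\<^sub>R z + t *\<^sub>R f z"
      using wseg unfolding in_segment by blast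
    define v where "v = f z - z"
    define d where "d = z - w"
    have wv: "w = z + of_real t * v" using wt unfolding v_def
      by (simp add: scaleR_conv_of_real algebra_simps)
    have dv: "d = - (of_real t * v)" unfolding d_def using wv by simp
    have fzw: "f z - w = of_real (1 - t) * v" using wv unfolding v_def by (simp add: algebra_simps)
    show False
    proof (cases "t = 0")
      case True then show False using wv fw fz by simp
    next
      case False
      hence tpos: "t > 0" using t by simp
      have vnz: "v \<noteq> 0" using fz v_def by simp
      have dnz: "d \<noteq> 0" using dv vnz tpos by simp
      define h where "h = (\<lambda>u. cnj d * f (w + u * d))"
      have inU: "w + of_real s * d \<in> U" if "0 \<le> s" "s \<le> 1" for s
      proof -
        have "w + of_real s * d = (1 - s) *\<^sub>R w + s *\<^sub>R z"
          unfolding d_def by (simp add: scaleR_conv_of_real algebra_simps)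
        moreover have "closed_segment w z \<subseteq> U"
          using assms(3) wU zU by (simp add: closed_segment_subset)
        moreover have "(1 - s) *\<^sub>R w + s *\<^sub>R z \<in> closed_segment w z"
          using that unfolding in_segment by blast
        ultimately show ?thesis by (metis subsetD)
      qed
      have "Re (h (of_real 0)) < Re (h (of_real 1))"
      proof (rule DERIV_pos_imp_increasing[where f="\<lambda>s. Re (h (of_real s))"])
        fix s :: real assume s: "0 \<le> s" "s \<le> 1"
        have "(h has_field_derivative cnj d * (deriv f (w + of_real s * d) * d)) (at (of_real s))"
        proof -
          have g: "((\<lambda>u. w + u * d) has_field_derivative d) (at (of_real s))"
            by (auto intro!: derivative_eq_intros)
          have "((\<lambda>u. f (w + u * d)) has_field_derivative deriv f (w + of_real s * d) * d) (at (of_real s))"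
            using DERIV_chain2[of f _ "\<lambda>u. w + u * d" "of_real s", OF _ g] der[OF inU[OF s]] by simp
          thus ?thesis unfolding h_def by (rule DERIV_cmult)
        qed
        hence "((\<lambda>s. h (of_real s)) has_vector_derivative cnj d * (deriv f (w + of_real s * d) * d)) (at s)"
          by (rule has_vector_derivative_real_field)
        hence "((\<lambda>s. Re (h (of_real s))) has_real_derivative Re (cnj d * (deriv f (w + of_real s * d) * d))) (at s)"
          by (rule has_field_derivative_Re)
        moreover have "Re (cnj d * (deriv f (w + of_real s * d) * d)) = (cmod d)^2 * Re (deriv f (w + of_real s * d))"
        proof -
          have nd: "cnj d * d = of_real ((cmod d)^2)"
            using complex_norm_square[of d] by (simp add: mult.commute)
          have "cnj d * (deriv f (w + of_real s * d) * d) = (cnj d * d) * deriv f (w + of_real s * d)"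
            by (simp only: mult_ac)
          also have "\<dots> = of_real ((cmod d)^2) * deriv f (w + of_real s * d)" by (simp only: nd)
          finally have eqd: "cnj d * (deriv f (w + of_real s * d) * d) = of_real ((cmod d)^2) * deriv f (w + of_real s * d)" .
          show ?thesis unfolding eqd by (rule Re_ofr)
        qed
        moreover have "(cmod d)^2 * Re (deriv f (w + of_real s * d)) > 0"
          using assms(8) inU[OF s] dnz by simp
        ultimately show "\<exists>y. ((\<lambda>s. Re (h (of_real s))) has_real_derivative y) (at s) \<and> 0 < y" by auto
      qed simp
      hence "Re (cnj d * f w) < Re (cnj d * f z)" unfolding h_def d_def by simp
      hence "0 < Re (cnj d * (f z - w))" using fw by (simp add: algebra_simps)
      also have "cnj d * (f z - w) = - of_real (t * (1 - t) * (cmod v)^2)"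
      proof -
        have nv: "cnj v * v = of_real ((cmod v)^2)"
          using complex_norm_square[of v] by (simp add: mult.commute)
        have "cnj d * (f z - w) = - (of_real (t * (1 - t)) * (cnj v * v))"
          unfolding dv fzw by (simp add: mult_ac)
        thus ?thesis by (simp only: nv of_real_mult[symmetric] of_real_minus[symmetric])
      qed
      finally have "t * (1 - t) * (cmod v)^2 < 0" by simp
      moreover have "0 \<le> t * (1 - t) * (cmod v)^2" using t by simp
      ultimately show False by linarith
    qed
  qed
  ultimately show "w \<in> {w \<in> U. f w \<noteq> w}" by simp
qed

end
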